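(* Consider the nonlinear program described in the context and the control-affine system $\dot x=-\nabla f(x)-\frac{\partial g}{\partial x}(x)^\top u-\frac{\partial h}{\partial x}(x)^\top v$ with inputs $(u,v)\in\mathcal{U}=\mathbb{R}^m_{\ge0}\times\mathbb{R}^k$. If MFCQ holds at every $x\in\mathcal{C}$, then there exists an open set $X$ containing $\mathcal{C}$ such that $\phi=(g,h):\mathbb{R}^n\to\mathbb{R}^{m+k}$ is an $(m,k)$-vector control barrier function of $\mathcal{C}$ on $X$ relative to $\mathcal{U}$ for this system.
   Context: Let $f:\mathbb{R}^n\to\mathbb{R}$, $g:\mathbb{R}^n\to\mathbb{R}^m$, $h:\mathbb{R}^n\to\mathbb{R}^k$ be continuously differentiable; program: minimize $f(x)$ subject to $g(x)\le0$, $h(x)=0$; feasible set $\mathcal{C}=\{x:g(x)\le0,h(x)=0\}$; $I_0(x)=\{i:g_i(x)=0\}$. MFCQ at $x$: $\{\nabla h_j(x)\}_{j=1}^k$ linearly independent and some $\xi$ has $\nabla h_j(x)^\top\xi=0$ for all $j$ and $\nabla g_i(x)^\top\xi<0$ for $i\in I_0(x)$. For a set $\mathcal{C}\subset X\subset\mathbb{R}^n$, a continuously differentiable $\phi:\mathbb{R}^n\to\mathbb{R}^{m+k}$ is an $(m,k)$-vector control barrier function of $\mathcal{C}$ on $X$ relative to $\mathcal{U}$ (for a control-affine system $\dot x=F_0(x)+\sum_\ell w_\ell F_\ell(x)$) if $\mathcal{C}=\{x:\phi_i(x)\le0,\ 1\le i\le m;\ \phi_j(x)=0,\ m<j\le m+k\}$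 and there exists $\alpha>0$ such that, for all $x\in X$, the set of $w\in\mathcal{U}$ with $\nabla\phi_i(x)^\top(F_0(x)+\sum_\ell w_\ell F_\ell(x))+\alpha\phi_i(x)\le0$ for $1\le i\le m$ and $\nabla\phi_j(x)^\top(F_0(x)+\sum_\ell w_\ell F_\ell(x))+\alpha\phi_j(x)=0$ for $m<j\le m+k$ is nonempty. For the system above, with $G=\frac{\partial g}{\partial x}(x)$, $H=\frac{\partial h}{\partial x}(x)$, this set is $K_\alpha(x)=\{(u,v)\in\mathbb{R}^m_{\ge0}\times\mathbb{R}^k: -GG^\top u-GH^\top v\le G\nabla f(x)-\alpha g(x),\ -HG^\top u-HH^\top v=H\nabla f(x)-\alpha h(x)\}$. *)

theory Defs
  imports "HOL-Analysis.Analysis"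
begin

definition grad :: "(real^'n \<Rightarrow> real) \<Rightarrow> real^'n \<Rightarrow> real^'n" where
  "grad p x = (SOME D. GDERIV p x :> D)"

definition C1_fun :: "(real^'n \<Rightarrow> real) \<Rightarrow> bool" where
  "C1_fun p \<longleftrightarrow> (\<forall>x. \<exists>D. GDERIV p x :> D) \<and> continuous_on UNIV (grad p)"

definition feasible_set ::
  "nat \<Rightarrow> nat \<Rightarrow> (nat \<Rightarrow> real^'n \<Rightarrow> real) \<Rightarrow> (nat \<Rightarrow> real^'n \<Rightarrow> real) \<Rightarrow> (real^'n) set" where
  "feasible_set m k g h = {x. (\<forall>i<m. g i x \<le> 0) \<and> (\<forall>j<k. h j x = 0)}"

definition MFCQ ::
  "nat \<Rightarrow> nat \<Rightarrow> (nat \<Rightarrow> real^'n \<Rightarrow> real) \<Rightarrow> (nat \<Rightarrow> real^'n \<Rightarrow> real) \<Rightarrow> real^'n \<Rightarrow> bool" where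
  "MFCQ m k g h x \<longleftrightarrow>
     (\<forall>c::nat \<Rightarrow> real. (\<Sum>j<k. c j *\<^sub>R grad (h j) x) = 0 \<longrightarrow> (\<forall>j<k. c j = 0)) \<and>
     (\<exists>\<xi>. (\<forall>j<k. grad (h j) x \<bullet> \<xi> = 0) \<and> (\<forall>i<m. g i x = 0 \<longrightarrow> grad (g i) x \<bullet> \<xi> < 0))"

text \<open>(m,k)-vector control barrier function \<phi> (components \<phi>_0..\<phi>_(m+k-1)) of C on X relative
  to U, for the control-affine system dx/dt = F0 x + \<Sum>l<p. w l *R F l x with p inputs.\<close>
definition vector_cbf ::
  "nat \<Rightarrow> nat \<Rightarrow> (nat \<Rightarrow> real^'n \<Rightarrow> real) \<Rightarrow> (real^'n) set \<Rightarrow> (real^'n) set \<Rightarrow>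
   nat \<Rightarrow> (real^'n \<Rightarrow> real^'n) \<Rightarrow> (nat \<Rightarrow> real^'n \<Rightarrow> real^'n) \<Rightarrow> (nat \<Rightarrow> real) set \<Rightarrow> bool" where
  "vector_cbf m k \<phi> C X p F0 F U \<longleftrightarrow>
     C \<subseteq> X \<and>
     (\<forall>i<m+k. C1_fun (\<phi> i)) \<and>
     C = {x. (\<forall>i<m. \<phi> i x \<le> 0) \<and> (\<forall>j\<in>{m..<m+k}. \<phi> j x = 0)} \<and>
     (\<exists>\<alpha>>0. \<forall>x\<in>X. \<exists>w\<in>U.
        (\<forall>i<m. grad (\<phi> i) x \<bullet> (F0 x + (\<Sum>l<p. w l *\<^sub>R F l x)) + \<alpha> * \<phi> i x \<le> 0) \<and>
        (\<forall>j\<in>{m..<m+k}. grad (\<phi> j) x \<bullet> (F0 x + (\<Sum>l<p. w l *\<^sub>R F l x)) + \<alpha> * \<phi> j x = 0))"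

end

theory Submission
  imports Defs
begin


lemma kkt:
  fixes A :: "nat \<Rightarrow> 'a::euclidean_space" and c :: "nat \<Rightarrow> real" and q :: 'a
  assumes mN: "m \<le> N" and ex: "\<exists>y. (\<forall>l<m. c l \<le> A l \<bullet> y) \<and> (\<forall>l\<in>{m..<N}. A l \<bullet> y = c l)"
  shows "\<exists>w. (\<forall>l<m. 0 \<le> w l) \<and> (\<forall>l<m. c l \<le> A l \<bullet> (q + (\<Sum>i<N. w i *\<^sub>R A i)))
            \<and> (\<forall>l\<in>{m..<N}. A l \<bullet> (q + (\<Sum>i<N. w i *\<^sub>R A i)) = c l)"
proof -
  define P where "P = {y. (\<forall>l<m. c l \<le> A l \<bullet> y) \<and> (\<forall>l\<in>{m..<N}. A l \<bullet> y = c l)}"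
  have clP: "closed P"
  proof -
    have "P = (\<Inter>l\<in>{..<m}. {y. c l \<le> A l \<bullet> y}) \<inter> (\<Inter>l\<in>{m..<N}. {y. A l \<bullet> y = c l})"
      unfolding P_def by auto
    moreover have "closed {y. c l \<le> A l \<bullet> y}" for l
      by (intro closed_Collect_le continuous_intros)
    moreover have "closed {y. A l \<bullet> y = c l}" for l
      by (intro closed_Collect_eq continuous_intros)
    ultimately show ?thesis by (auto intro!: closed_Int closed_INT)
  qed
  have "P \<noteq> {}" using ex unfolding P_def by auto
  then obtain y0 where y0P: "y0 \<in> P" and y0min: "\<And>y. y \<in> P \<Longrightarrow> dist q y0 \<le> dist q y"
    using distance_attains_inf[OF clP] by blast
  define K where "K = {\<Sum>i<N. w i *\<^sub>R A i | w. \<forall>l<m. 0 \<le> w l}"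
  define S where "S = A ` {..<m} \<union> A ` {m..<N} \<union> uminus ` A ` {m..<N}"
  have ccK: "convex_cone K"
    unfolding convex_cone_iff
  proof (intro conjI)
    show "0 \<in> K" unfolding K_def by (rule CollectI, rule exI[of _ "\<lambda>_. 0"]) auto
    show "\<forall>x\<in>K. \<forall>y\<in>K. x + y \<in> K"
    proof (intro ballI)
      fix x y assume "x \<in> K" "y \<in> K"
      then obtain w1 w2 where "x = (\<Sum>i<N. w1 i *\<^sub>R A i)" "\<forall>l<m. 0 \<le> w1 l"
         "y = (\<Sum>i<N. w2 i *\<^sub>R A i)" "\<forall>l<m. 0 \<le> w2 l" unfolding K_def by auto
      then show "x + y \<in> K" unfolding K_def
        by (intro CollectI exI[of _ "\<lambda>i. w1 i + w2 i"]) (auto simp: scaleR_add_left sum.distrib)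
    qed
    show "\<forall>x\<in>K. \<forall>t\<ge>0. t *\<^sub>R x \<in> K"
    proof (intro ballI allI impI)
      fix x and t :: real assume "x \<in> K" "0 \<le> t"
      then obtain w1 where "x = (\<Sum>i<N. w1 i *\<^sub>R A i)" "\<forall>l<m. 0 \<le> w1 l"
        unfolding K_def by auto
      then show "t *\<^sub>R x \<in> K" unfolding K_def using \<open>0 \<le> t\<close>
        by (intro CollectI exI[of _ "\<lambda>i. t * w1 i"]) (auto simp: scaleR_sum_right)
    qed
  qed
  have SK: "S \<subseteq> K"
  proof -
    have gen: "(\<Sum>i<N. (if i = l then s else 0) *\<^sub>R A i) = s *\<^sub>R A l" if "l < N" for l s
    proof -
      have "(\<Sum>i<N. (if i = l then s else 0) *\<^sub>R A i) = (\<Sum>i<N. if i = l then s *\<^sub>R A i else 0)"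
        by (intro sum.cong) auto
      also have "\<dots> = s *\<^sub>R A l" using that by simp
      finally show ?thesis .
    qed
    have "A l \<in> K" if "l < N" for l
      unfolding K_def using gen[OF that, of 1]
      by (intro CollectI exI[of _ "\<lambda>i. if i = l then 1 else 0"]) auto
    moreover have "- A l \<in> K" if "m \<le> l" "l < N" for l
      unfolding K_def using gen[OF that(2), of "-1"] that
      by (intro CollectI exI[of _ "\<lambda>i. if i = l then -1 else 0"]) auto
    ultimately show ?thesis unfolding S_def using mN
      by auto
  qed
  have HK: "convex_cone hull S \<subseteq> K"
    using SK ccK by (simp add: hull_minimal)
  define z where "z = y0 - q"
  have "z \<in> convex_cone hull S"
  proof (rule ccontr)
    assume zn: "z \<notin> convex_cone hull S"
    have fin: "finite S" unfolding S_def by auto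
    obtain a b where ab: "a \<bullet> z < b" "\<forall>x\<in>convex_cone hull S. a \<bullet> x > b"
      using separating_hyperplane_closed_point[OF convex_convex_cone_hull closed_convex_cone_hull[OF fin] zn]
      by blast
    have b0: "b < 0" using ab(2) convex_cone_hull_contains_0 by fastforce
    have pos: "a \<bullet> s \<ge> 0" if "s \<in> S" for s
    proof (rule ccontr)
      assume "\<not> 0 \<le> a \<bullet> s"
      then have neg: "a \<bullet> s < 0" by simp
      have "(b / (a \<bullet> s)) *\<^sub>R s \<in> convex_cone hull S"
        using b0 neg that by (intro convex_cone_hull_mul hull_inc) (auto simp: divide_nonpos_neg)
      then have "a \<bullet> ((b / (a \<bullet> s)) *\<^sub>R s) > b" using ab(2) by blast
      then show False using neg by simp
    qed
    have g1: "\<forall>l<m. 0 \<le> a \<bullet> A l" using pos unfolding S_def by auto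
    have g2: "\<forall>l\<in>{m..<N}. a \<bullet> A l = 0"
    proof
      fix l assume "l \<in> {m..<N}"
      then have "A l \<in> S" "- A l \<in> S" unfolding S_def by auto
      then have "0 \<le> a \<bullet> A l" "0 \<le> a \<bullet> (- A l)" using pos by blast+
      then show "a \<bullet> A l = 0" by simp
    qed
    have az: "a \<bullet> z < 0" using ab b0 by simp
    then have an: "a \<noteq> 0" by auto
    then have aa: "a \<bullet> a > 0" by simp
    define t where "t = - (a \<bullet> z) / (a \<bullet> a)"
    have t0: "t \<ge> 0" unfolding t_def using az aa by (simp add: divide_nonpos_pos)
    define y1 where "y1 = y0 + t *\<^sub>R a"
    have "y1 \<in> P"
      using y0P g1 g2 t0 unfolding P_def y1_def
      by (auto simp: inner_add_right inner_commute intro: add_increasing2)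
    then have "dist q y0 \<le> dist q y1" by (rule y0min)
    then have "norm z \<le> norm (z + t *\<^sub>R a)"
      unfolding z_def y1_def dist_norm by (simp add: norm_minus_commute algebra_simps)
    then have "(norm z)\<^sup>2 \<le> (norm (z + t *\<^sub>R a))\<^sup>2" by (simp add: power_mono)
    then have "z \<bullet> z \<le> z \<bullet> z + 2 * t * (a \<bullet> z) + t * t * (a \<bullet> a)"
      by (simp add: power2_norm_eq_inner inner_add_left inner_add_right inner_commute algebra_simps)
    moreover have "2 * t * (a \<bullet> z) + t * t * (a \<bullet> a) = - ((a \<bullet> z) * (a \<bullet> z)) / (a \<bullet> a)"
      unfolding t_def using aa by (simp add: field_simps)
    moreover have "((a \<bullet> z) * (a \<bullet> z)) / (a \<bullet> a) > 0" using az aa by (intro divide_pos_pos mult_neg_neg) auto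
    ultimately show False by linarith
  qed
  then have "z \<in> K" using HK by blast
  then obtain w where w: "z = (\<Sum>i<N. w i *\<^sub>R A i)" "\<forall>l<m. 0 \<le> w l" unfolding K_def by auto
  have "y0 = q + (\<Sum>i<N. w i *\<^sub>R A i)" using w(1) unfolding z_def by (metis add.commute diff_add_cancel)
  then show ?thesis using y0P w(2) unfolding P_def by auto
qed



lemma span_idx:
  fixes a :: "nat \<Rightarrow> 'a::real_vector"
  assumes "finite I" "y \<in> span (a ` I)"
  shows "\<exists>c. y = (\<Sum>j\<in>I. c j *\<^sub>R a j)"
proof -
  define T where "T = {y. \<exists>c. y = (\<Sum>j\<in>I. c j *\<^sub>R a j)}"
  have "subspace T" unfolding subspace_def T_def
  proof (intro conjI ballI allI)
    show "0 \<in> {y. \<exists>c. y = (\<Sum>j\<in>I. c j *\<^sub>R a j)}" by (auto intro!: exI[of _ "\<lambda>_. 0"])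
  next
    fix x y assume "x \<in> {y. \<exists>c. y = (\<Sum>j\<in>I. c j *\<^sub>R a j)}" "y \<in> {y. \<exists>c. y = (\<Sum>j\<in>I. c j *\<^sub>R a j)}"
    then obtain c1 c2 where "x = (\<Sum>j\<in>I. c1 j *\<^sub>R a j)" "y = (\<Sum>j\<in>I. c2 j *\<^sub>R a j)" by auto
    then show "x + y \<in> {y. \<exists>c. y = (\<Sum>j\<in>I. c j *\<^sub>R a j)}"
      by (auto intro!: exI[of _ "\<lambda>j. c1 j + c2 j"] simp: scaleR_add_left sum.distrib)
  next
    fix s :: real and x assume "x \<in> {y. \<exists>c. y = (\<Sum>j\<in>I. c j *\<^sub>R a j)}"
    then obtain c1 where "x = (\<Sum>j\<in>I. c1 j *\<^sub>R a j)" by auto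
    then show "s *\<^sub>R x \<in> {y. \<exists>c. y = (\<Sum>j\<in>I. c j *\<^sub>R a j)}"
      by (auto intro!: exI[of _ "\<lambda>j. s * c1 j"] simp: scaleR_sum_right)
  qed
  moreover have "a ` I \<subseteq> T"
  proof
    fix v assume "v \<in> a ` I"
    then obtain l where l: "l \<in> I" "v = a l" by auto
    have "(\<Sum>j\<in>I. (if j = l then 1 else 0) *\<^sub>R a j) = (\<Sum>j\<in>I. if j = l then a j else 0)"
      by (intro sum.cong) auto
    also have "\<dots> = a l" using l assms(1) by simp
    finally show "v \<in> T" unfolding T_def using l by (auto intro!: exI[of _ "\<lambda>j. if j = l then 1 else 0"])
  qed
  ultimately have "span (a ` I) \<subseteq> T" by (rule span_minimal[rotated])
  then show ?thesis using assms(2) unfolding T_def by auto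
qed

lemma dual_basis:
  fixes a :: "nat \<Rightarrow> 'a::euclidean_space"
  assumes indep: "\<forall>c. (\<Sum>j<k. c j *\<^sub>R a j) = 0 \<longrightarrow> (\<forall>j<k. c j = 0)"
  shows "\<exists>e. \<forall>l<k. \<forall>j<k. a j \<bullet> e l = (if j = l then 1 else 0)"
proof -
  have "\<exists>v. \<forall>j<k. a j \<bullet> v = (if j = l then 1 else 0)" if lk: "l < k" for l
  proof -
    define I where "I = {..<k} - {l}"
    obtain p r where p: "p \<in> span (a ` I)" and r: "\<And>w. w \<in> span (a ` I) \<Longrightarrow> orthogonal r w"
      and pr: "a l = p + r"
      using orthogonal_subspace_decomp_exists[where S="a ` I" and x="a l"] by metis
    have rn: "r \<noteq> 0"
    proof
      assume "r = 0"
      then have "a l \<in> span (a ` I)" using p pr by simp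
      then obtain c where c: "a l = (\<Sum>j\<in>I. c j *\<^sub>R a j)"
        using span_idx[where I=I and a=a and y="a l"] unfolding I_def by auto
      define c' where "c' j = (if j = l then -1 else c j)" for j
      have kI: "{..<k} = insert l I" "l \<notin> I" "finite I" using lk unfolding I_def by auto
      have "(\<Sum>j<k. c' j *\<^sub>R a j) = c' l *\<^sub>R a l + (\<Sum>j\<in>I. c' j *\<^sub>R a j)"
        using kI by (simp add: sum.insert)
      also have "(\<Sum>j\<in>I. c' j *\<^sub>R a j) = (\<Sum>j\<in>I. c j *\<^sub>R a j)"
        unfolding c'_def using kI(2) by (intro sum.cong) auto
      finally have "(\<Sum>j<k. c' j *\<^sub>R a j) = 0" using c unfolding c'_def by simp
      then have "c' l = 0" using indep lk by blast
      then show False unfolding c'_def by simp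
    qed
    define v where "v = (1 / (r \<bullet> r)) *\<^sub>R r"
    have rr: "r \<bullet> r > 0" using rn by simp
    show ?thesis
    proof (intro exI allI impI)
      fix j assume jk: "j < k"
      show "a j \<bullet> v = (if j = l then 1 else 0)"
      proof (cases "j = l")
        case True
        have "orthogonal r p" using r p by blast
        then have "p \<bullet> r = 0" by (simp add: orthogonal_def inner_commute)
        then show ?thesis using True pr rr unfolding v_def by (simp add: inner_add_left)
      next
        case False
        then have "a j \<in> span (a ` I)" using jk unfolding I_def by (intro span_base) auto
        then have "orthogonal r (a j)" using r by blast
        then show ?thesis using False unfolding v_def by (simp add: orthogonal_def inner_commute)
      qed
    qed
  qed
  then show ?thesis by metis
qed


lemma core_fix:
  fixes bb a e :: "nat \<Rightarrow> 'a::euclidean_space" and r :: "nat \<Rightarrow> real"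
  assumes dual: "\<forall>l<k. \<forall>j<k. bb j \<bullet> e l = (if j = l then 1 else 0)"
    and small: "(\<Sum>l<k. norm (bb l - a l) * norm (e l)) \<le> 1/2"
  shows "\<exists>s. (\<forall>j<k. a j \<bullet> s = r j) \<and> norm s \<le> 2 * (\<Sum>l<k. \<bar>r l\<bar> * norm (e l))"
proof -
  define S where "S = span (e ` {..<k})"
  define \<Phi> where "\<Phi> s = s + (\<Sum>l<k. (r l - a l \<bullet> s) *\<^sub>R e l)" for s
  define L where "L = (\<Sum>l<k. norm (bb l - a l) * norm (e l))"
  have repr: "\<delta> = (\<Sum>l<k. (bb l \<bullet> \<delta>) *\<^sub>R e l)" if dS: "\<delta> \<in> S" for \<delta>
  proof -
    obtain c where c: "\<delta> = (\<Sum>l<k. c l *\<^sub>R e l)"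
      using span_idx[where I="{..<k}" and a=e and y=\<delta>] dS unfolding S_def by auto
    have "bb j \<bullet> \<delta> = c j" if "j < k" for j
    proof -
      have "bb j \<bullet> \<delta> = (\<Sum>l<k. c l * (bb j \<bullet> e l))" unfolding c by (simp add: inner_sum_right)
      also have "\<dots> = (\<Sum>l<k. if l = j then c l else 0)"
        using dual that by (intro sum.cong) auto
      also have "\<dots> = c j" using that by simp
      finally show ?thesis .
    qed
    then have "(\<Sum>l<k. (bb l \<bullet> \<delta>) *\<^sub>R e l) = (\<Sum>l<k. c l *\<^sub>R e l)" by (intro sum.cong) auto
    then show ?thesis using c by simp
  qed
  have diff: "\<Phi> x - \<Phi> y = (\<Sum>l<k. ((bb l - a l) \<bullet> (x - y)) *\<^sub>R e l)" if "x \<in> S" "y \<in> S" for x y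
  proof -
    have xy: "x - y \<in> S" using that unfolding S_def by (simp add: span_diff)
    have "\<Phi> x - \<Phi> y = (x - y) + ((\<Sum>l<k. (r l - a l \<bullet> x) *\<^sub>R e l) - (\<Sum>l<k. (r l - a l \<bullet> y) *\<^sub>R e l))"
      unfolding \<Phi>_def by (simp add: algebra_simps)
    also have "(\<Sum>l<k. (r l - a l \<bullet> x) *\<^sub>R e l) - (\<Sum>l<k. (r l - a l \<bullet> y) *\<^sub>R e l)
       = (\<Sum>l<k. (r l - a l \<bullet> x) *\<^sub>R e l - (r l - a l \<bullet> y) *\<^sub>R e l)"
      by (simp add: sum_subtractf)
    also have "\<dots> = (\<Sum>l<k. - ((a l \<bullet> (x - y)) *\<^sub>R e l))"
      by (intro sum.cong) (auto simp: algebra_simps inner_diff_right)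
    also have "\<dots> = - (\<Sum>l<k. (a l \<bullet> (x - y)) *\<^sub>R e l)" by (simp add: sum_negf)
    finally have "\<Phi> x - \<Phi> y = (x - y) - (\<Sum>l<k. (a l \<bullet> (x - y)) *\<^sub>R e l)" by simp
    also have "\<dots> = (\<Sum>l<k. (bb l \<bullet> (x - y)) *\<^sub>R e l) - (\<Sum>l<k. (a l \<bullet> (x - y)) *\<^sub>R e l)"
      using repr[OF xy] by simp
    also have "\<dots> = (\<Sum>l<k. ((bb l - a l) \<bullet> (x - y)) *\<^sub>R e l)"
      by (simp add: sum_subtractf[symmetric] scaleR_diff_left inner_diff_left)
    finally show ?thesis .
  qed
  have lip: "norm (\<Phi> x - \<Phi> y) \<le> L * norm (x - y)" if "x \<in> S" "y \<in> S" for x y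
  proof -
    have "norm (\<Phi> x - \<Phi> y) \<le> (\<Sum>l<k. norm (((bb l - a l) \<bullet> (x - y)) *\<^sub>R e l))"
      unfolding diff[OF that] by (rule norm_sum)
    also have "\<dots> \<le> (\<Sum>l<k. norm (bb l - a l) * norm (e l) * norm (x - y))"
    proof (intro sum_mono)
      fix l
      have "\<bar>(bb l - a l) \<bullet> (x - y)\<bar> \<le> norm (bb l - a l) * norm (x - y)"
        by (rule Cauchy_Schwarz_ineq2)
      then show "norm (((bb l - a l) \<bullet> (x - y)) *\<^sub>R e l) \<le> norm (bb l - a l) * norm (e l) * norm (x - y)"
      proof -
        have "norm (((bb l - a l) \<bullet> (x - y)) *\<^sub>R e l) = \<bar>(bb l - a l) \<bullet> (x - y)\<bar> * norm (e l)"
          by simp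
        also have "\<dots> \<le> norm (bb l - a l) * norm (x - y) * norm (e l)"
          using \<open>\<bar>(bb l - a l) \<bullet> (x - y)\<bar> \<le> _\<close> by (rule mult_right_mono) simp
        finally show ?thesis by (simp only: mult.commute mult.left_commute mult.assoc)
      qed
    qed
    also have "\<dots> = L * norm (x - y)" unfolding L_def by (simp add: sum_distrib_right)
    finally show ?thesis .
  qed
  have L2: "L \<le> 1/2" using small unfolding L_def .
  have L0: "0 \<le> L" unfolding L_def by (intro sum_nonneg) auto
  have PS: "\<Phi> ` S \<subseteq> S"
  proof
    fix z assume "z \<in> \<Phi> ` S"
    then obtain s where s: "s \<in> S" "z = \<Phi> s" by auto
    have "(\<Sum>l<k. (r l - a l \<bullet> s) *\<^sub>R e l) \<in> S" unfolding S_def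
      by (intro span_sum span_scale span_base) auto
    then show "z \<in> S" using s unfolding \<Phi>_def S_def by (simp add: span_add)
  qed
  have cS: "complete S" unfolding S_def by (simp add: complete_eq_closed)
  have nS: "S \<noteq> {}" unfolding S_def using span_zero by blast
  have L1: "L < 1" using L2 by simp
  have lip': "dist (\<Phi> x) (\<Phi> y) \<le> L * dist x y" if "x \<in> S" "y \<in> S" for x y
    using lip[OF that] by (simp add: dist_norm)
  have "\<exists>!x\<in>S. \<Phi> x = x" by (rule Banach_fix[OF cS nS L0 L1 PS lip'])
  then obtain s where sS: "s \<in> S" and fix_s: "\<Phi> s = s" by blast
  have z: "(\<Sum>l<k. (r l - a l \<bullet> s) *\<^sub>R e l) = 0" using fix_s unfolding \<Phi>_def by simp
  have eqs: "a j \<bullet> s = r j" if jk: "j < k" for j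
  proof -
    have "0 = bb j \<bullet> (\<Sum>l<k. (r l - a l \<bullet> s) *\<^sub>R e l)" using z by simp
    also have "\<dots> = (\<Sum>l<k. (r l - a l \<bullet> s) * (bb j \<bullet> e l))" by (simp add: inner_sum_right)
    also have "\<dots> = (\<Sum>l<k. if l = j then r l - a l \<bullet> s else 0)"
      using dual jk by (intro sum.cong) auto
    also have "\<dots> = r j - a j \<bullet> s" using jk by simp
    finally show ?thesis by simp
  qed
  have z0: "0 \<in> S" unfolding S_def by (rule span_zero)
  have n1: "norm s \<le> norm (\<Phi> s - \<Phi> 0) + norm (\<Phi> 0)"
    using norm_triangle_ineq[of "\<Phi> s - \<Phi> 0" "\<Phi> 0"] fix_s by simp
  have n2: "norm (\<Phi> s - \<Phi> 0) \<le> L * norm s" using lip[OF sS z0] by simp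
  have "\<Phi> 0 = (\<Sum>l<k. r l *\<^sub>R e l)" unfolding \<Phi>_def by simp
  then have "norm (\<Phi> 0) \<le> (\<Sum>l<k. norm (r l *\<^sub>R e l))" by (simp only: norm_sum)
  also have "\<dots> = (\<Sum>l<k. \<bar>r l\<bar> * norm (e l))" by simp
  finally have n3: "norm (\<Phi> 0) \<le> (\<Sum>l<k. \<bar>r l\<bar> * norm (e l))" .
  have "norm s \<le> L * norm s + (\<Sum>l<k. \<bar>r l\<bar> * norm (e l))" using n1 n2 n3 by linarith
  moreover have "L * norm s \<le> 1/2 * norm s" using L2 by (intro mult_right_mono) auto
  ultimately have "norm s \<le> 2 * (\<Sum>l<k. \<bar>r l\<bar> * norm (e l))" by linarith
  then show ?thesis using eqs by blast
qed


lemma local_feas: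
  fixes G H :: "nat \<Rightarrow> 'a::euclidean_space \<Rightarrow> real" and DG DH :: "nat \<Rightarrow> 'a \<Rightarrow> 'a" and x0 \<xi> :: 'a
  assumes cG: "\<forall>i<m. isCont (G i) x0" and cDG: "\<forall>i<m. isCont (DG i) x0"
    and cH: "\<forall>j<k. isCont (H j) x0" and cDH: "\<forall>j<k. isCont (DH j) x0"
    and fG: "\<forall>i<m. G i x0 \<le> 0" and fH: "\<forall>j<k. H j x0 = 0"
    and indep: "\<forall>c. (\<Sum>j<k. c j *\<^sub>R DH j x0) = 0 \<longrightarrow> (\<forall>j<k. c j = 0)"
    and xiH: "\<forall>j<k. DH j x0 \<bullet> \<xi> = 0" and xiG: "\<forall>i<m. G i x0 = 0 \<longrightarrow> DG i x0 \<bullet> \<xi> < 0"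
  shows "eventually (\<lambda>x. \<exists>y. (\<forall>i<m. G i x \<le> DG i x \<bullet> y) \<and> (\<forall>j<k. DH j x \<bullet> y = H j x)) (nhds x0)"
proof -
  obtain e where e: "\<forall>l<k. \<forall>j<k. DH j x0 \<bullet> e l = (if j = l then 1 else 0)"
    using dual_basis[OF indep] by blast
  have "\<exists>t>0. \<forall>i<m. 0 < - t * (DG i x0 \<bullet> \<xi>) - G i x0"
  proof -
    have ev: "eventually (\<lambda>t. 0 < - t * (DG i x0 \<bullet> \<xi>) - G i x0) (at_right 0)" if im: "i < m" for i
    proof (cases "G i x0 = 0")
      case True
      then have d: "DG i x0 \<bullet> \<xi> < 0" using xiG im by blast
      have "eventually (\<lambda>t::real. 0 < t) (at_right 0)" by (rule eventually_at_right_less)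
      then show ?thesis
      proof (rule eventually_mono)
        fix t :: real assume "0 < t"
        then have "t * (DG i x0 \<bullet> \<xi>) < 0" using d by (rule mult_pos_neg)
        then show "0 < - t * (DG i x0 \<bullet> \<xi>) - G i x0" using True by simp
      qed
    next
      case False
      then have g: "0 < - G i x0" using fG im by force
      have "((\<lambda>t. - t * (DG i x0 \<bullet> \<xi>) - G i x0) \<longlongrightarrow> - 0 * (DG i x0 \<bullet> \<xi>) - G i x0) (at_right 0)"
        by (intro tendsto_intros)
      then have "((\<lambda>t. - t * (DG i x0 \<bullet> \<xi>) - G i x0) \<longlongrightarrow> - G i x0) (at_right 0)" by simp
      from order_tendstoD(1)[OF this g] show ?thesis .
    qed
    have "eventually (\<lambda>t. \<forall>i\<in>{..<m}. 0 < - t * (DG i x0 \<bullet> \<xi>) - G i x0) (at_right (0::real))"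
      using ev by (intro eventually_ball_finite) auto
    then have "eventually (\<lambda>t. 0 < t \<and> (\<forall>i\<in>{..<m}. 0 < - t * (DG i x0 \<bullet> \<xi>) - G i x0)) (at_right (0::real))"
      using eventually_at_right_less by (rule eventually_conj[rotated])
    then obtain t where "0 < t \<and> (\<forall>i\<in>{..<m}. 0 < - t * (DG i x0 \<bullet> \<xi>) - G i x0)"
      using eventually_happens[of _ "at_right (0::real)"] by auto
    then show ?thesis by auto
  qed
  then obtain t where t0: "t > 0" and tpos: "\<forall>i<m. 0 < - t * (DG i x0 \<bullet> \<xi>) - G i x0" by blast
  define r where "r l x = H l x + t * (DH l x \<bullet> \<xi>)" for l x
  define B where "B x = 2 * (\<Sum>l<k. \<bar>r l x\<bar> * norm (e l))" for x
  define L where "L x = (\<Sum>l<k. norm (DH l x0 - DH l x) * norm (e l))" for x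
  define \<eta> where "\<eta> i = - t * (DG i x0 \<bullet> \<xi>) - G i x0" for i
  have cnr: "(f \<longlongrightarrow> f x0) (nhds x0)" if "isCont f x0" for f :: "'a \<Rightarrow> real"
    using that by (simp add: isCont_def tendsto_at_iff_tendsto_nhds)
  have cnv: "(f \<longlongrightarrow> f x0) (nhds x0)" if "isCont f x0" for f :: "'a \<Rightarrow> 'a"
    using that by (simp add: isCont_def tendsto_at_iff_tendsto_nhds)
  have "(L \<longlongrightarrow> (\<Sum>l<k. norm (DH l x0 - DH l x0) * norm (e l))) (nhds x0)"
    unfolding L_def using cDH by (intro tendsto_sum tendsto_mult tendsto_norm tendsto_diff tendsto_const cnv) auto
  then have tL: "(L \<longlongrightarrow> 0) (nhds x0)" by simp
  have "(B \<longlongrightarrow> 2 * (\<Sum>l<k. \<bar>H l x0 + t * (DH l x0 \<bullet> \<xi>)\<bar> * norm (e l))) (nhds x0)"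
    unfolding B_def r_def using cDH cH
    by (intro tendsto_sum tendsto_mult tendsto_norm tendsto_diff tendsto_const tendsto_add tendsto_rabs
        tendsto_inner cnv cnr) auto
  then have tB: "(B \<longlongrightarrow> 0) (nhds x0)" using fH xiH by simp
  have E1: "eventually (\<lambda>x. L x < 1/2) (nhds x0)"
    using order_tendstoD(2)[OF tL, of "1/2"] by simp
  have E2: "eventually (\<lambda>x. \<forall>i\<in>{..<m}. \<eta> i / 2 < - t * (DG i x \<bullet> \<xi>) - G i x \<and> norm (DG i x) * B x < \<eta> i / 2) (nhds x0)"
  proof (intro eventually_ball_finite ballI finite_lessThan)
    fix i assume "i \<in> {..<m}"
    then have im: "i < m" by simp
    have eta: "0 < \<eta> i" using tpos im unfolding \<eta>_def by blast
    have "((\<lambda>x. - t * (DG i x \<bullet> \<xi>) - G i x) \<longlongrightarrow> \<eta> i) (nhds x0)"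
      unfolding \<eta>_def using cDG cG im
      by (intro tendsto_intros cnv cnr) auto
    then have a: "eventually (\<lambda>x. \<eta> i / 2 < - t * (DG i x \<bullet> \<xi>) - G i x) (nhds x0)"
      using eta by (intro order_tendstoD(1)) auto
    have "((\<lambda>x. norm (DG i x) * B x) \<longlongrightarrow> norm (DG i x0) * 0) (nhds x0)"
      using cDG im by (intro tendsto_intros cnv tB) auto
    then have b: "eventually (\<lambda>x. norm (DG i x) * B x < \<eta> i / 2) (nhds x0)"
      using eta by (intro order_tendstoD(2)) auto
    show "eventually (\<lambda>x. \<eta> i / 2 < - t * (DG i x \<bullet> \<xi>) - G i x \<and> norm (DG i x) * B x < \<eta> i / 2) (nhds x0)"
      using a b by (rule eventually_conj)
  qed
  show ?thesis
    using eventually_conj[OF E1 E2]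
  proof (rule eventually_mono)
    fix x assume hx: "L x < 1/2 \<and> (\<forall>i\<in>{..<m}. \<eta> i / 2 < - t * (DG i x \<bullet> \<xi>) - G i x \<and> norm (DG i x) * B x < \<eta> i / 2)"
    have sm: "(\<Sum>l<k. norm (DH l x0 - DH l x) * norm (e l)) \<le> 1/2" using hx unfolding L_def by simp
    obtain s where s1: "\<forall>j<k. DH j x \<bullet> s = r j x" and s2: "norm s \<le> B x"
      using core_fix[where bb="\<lambda>j. DH j x0" and e=e and a="\<lambda>j. DH j x" and k=k and r="\<lambda>l. r l x", OF e sm]
      unfolding B_def by blast
    define y where "y = s - t *\<^sub>R \<xi>"
    have "\<forall>j<k. DH j x \<bullet> y = H j x"
      using s1 unfolding y_def r_def by (simp add: inner_diff_right)
    moreover have "\<forall>i<m. G i x \<le> DG i x \<bullet> y"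
    proof (intro allI impI)
      fix i assume im: "i < m"
      have h1: "\<eta> i / 2 < - t * (DG i x \<bullet> \<xi>) - G i x" and h2: "norm (DG i x) * B x < \<eta> i / 2"
        using hx im by auto
      have "\<bar>DG i x \<bullet> s\<bar> \<le> norm (DG i x) * norm s" by (rule Cauchy_Schwarz_ineq2)
      also have "\<dots> \<le> norm (DG i x) * B x" using s2 by (intro mult_left_mono) auto
      finally have "- (DG i x \<bullet> s) < \<eta> i / 2" using h2 by linarith
      then show "G i x \<le> DG i x \<bullet> y" using h1 unfolding y_def by (simp add: inner_diff_right)
    qed
    ultimately show "\<exists>y. (\<forall>i<m. G i x \<le> DG i x \<bullet> y) \<and> (\<forall>j<k. DH j x \<bullet> y = H j x)" by blast
  qed
qed



lemma C1_isCont: "C1_fun p \<Longrightarrow> isCont p x"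
  unfolding C1_fun_def gderiv_def using has_derivative_continuous by blast

lemma C1_isCont_grad: "C1_fun p \<Longrightarrow> isCont (grad p) x"
  unfolding C1_fun_def using continuous_on_eq_continuous_at[of UNIV "grad p"] by auto

theorem mainTheorem9:
  fixes f :: "real^'n \<Rightarrow> real"
    and g h :: "nat \<Rightarrow> real^'n \<Rightarrow> real"
    and m k :: nat
  assumes "C1_fun f"
    and "\<forall>i<m. C1_fun (g i)"
    and "\<forall>j<k. C1_fun (h j)"
    and "\<forall>x\<in>feasible_set m k g h. MFCQ m k g h x"
  shows "\<exists>X. open X \<and> feasible_set m k g h \<subseteq> X \<and>
           vector_cbf m k (\<lambda>i. if i < m then g i else h (i - m)) (feasible_set m k g h) X
             (m + k) (\<lambda>x. - grad f x)
             (\<lambda>l x. if l < m then - grad (g l) x else - grad (h (l - m)) x)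
             {w. \<forall>l<m. 0 \<le> w l}"
proof -
  define C where "C = feasible_set m k g h"
  define Pf where "Pf x = (\<exists>y. (\<forall>i<m. g i x \<le> grad (g i) x \<bullet> y) \<and> (\<forall>j<k. grad (h j) x \<bullet> y = h j x))" for x
  define X where "X = interior {x. Pf x}"
  have oX: "open X" unfolding X_def by simp
  have CX: "C \<subseteq> X"
  proof
    fix x0 assume x0C: "x0 \<in> C"
    then have mf: "MFCQ m k g h x0" using assms(4) unfolding C_def by blast
    then obtain \<xi> where xiH: "\<forall>j<k. grad (h j) x0 \<bullet> \<xi> = 0"
        and xiG: "\<forall>i<m. g i x0 = 0 \<longrightarrow> grad (g i) x0 \<bullet> \<xi> < 0"
      unfolding MFCQ_def by blast
    have indep: "\<forall>c. (\<Sum>j<k. c j *\<^sub>R grad (h j) x0) = 0 \<longrightarrow> (\<forall>j<k. c j = 0)"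
      using mf unfolding MFCQ_def by blast
    have "eventually Pf (nhds x0)"
      unfolding Pf_def
    proof (rule local_feas[where G=g and H=h and DG="\<lambda>i. grad (g i)" and DH="\<lambda>j. grad (h j)", OF _ _ _ _ _ _ indep xiH xiG])
      show "\<forall>i<m. isCont (g i) x0" using assms(2) C1_isCont by blast
      show "\<forall>i<m. isCont (grad (g i)) x0" using assms(2) C1_isCont_grad by blast
      show "\<forall>j<k. isCont (h j) x0" using assms(3) C1_isCont by blast
      show "\<forall>j<k. isCont (grad (h j)) x0" using assms(3) C1_isCont_grad by blast
      show "\<forall>i<m. g i x0 \<le> 0" "\<forall>j<k. h j x0 = 0" using x0C unfolding C_def feasible_set_def by auto
    qed
    then obtain S where "open S" "x0 \<in> S" "\<forall>x\<in>S. Pf x" unfolding eventually_nhds by blast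
    then show "x0 \<in> X" unfolding X_def by (meson interiorI mem_Collect_eq subsetI)
  qed
  have C1: "\<forall>i<m+k. C1_fun ((\<lambda>i. if i < m then g i else h (i - m)) i)"
    using assms(2,3) by auto
  have Ceq: "C = {x. (\<forall>i<m. (\<lambda>i. if i < m then g i else h (i - m)) i x \<le> 0) \<and>
                 (\<forall>j\<in>{m..<m+k}. (\<lambda>i. if i < m then g i else h (i - m)) j x = 0)}"
  proof -
    have "(\<forall>j<k. h j x = 0) \<longleftrightarrow> (\<forall>j\<in>{m..<m+k}. h (j - m) x = 0)" for x
    proof
      assume "\<forall>j<k. h j x = 0" then show "\<forall>j\<in>{m..<m+k}. h (j - m) x = 0" by auto
    next
      assume a: "\<forall>j\<in>{m..<m+k}. h (j - m) x = 0"
      show "\<forall>j<k. h j x = 0"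
      proof (intro allI impI)
        fix j assume "j < k"
        then have "j + m \<in> {m..<m+k}" by simp
        then show "h j x = 0" using a by fastforce
      qed
    qed
    then show ?thesis unfolding C_def feasible_set_def by auto
  qed
  have main: "\<exists>w\<in>{w. \<forall>l<m. 0 \<le> w l}.
        (\<forall>i<m. grad ((\<lambda>i. if i < m then g i else h (i - m)) i) x \<bullet>
            ((\<lambda>x. - grad f x) x + (\<Sum>l<m+k. w l *\<^sub>R (\<lambda>l x. if l < m then - grad (g l) x else - grad (h (l - m)) x) l x))
            + 1 * (\<lambda>i. if i < m then g i else h (i - m)) i x \<le> 0) \<and>
        (\<forall>j\<in>{m..<m+k}. grad ((\<lambda>i. if i < m then g i else h (i - m)) j) x \<bullet>
            ((\<lambda>x. - grad f x) x + (\<Sum>l<m+k. w l *\<^sub>R (\<lambda>l x. if l < m then - grad (g l) x else - grad (h (l - m)) x) l x))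
            + 1 * (\<lambda>i. if i < m then g i else h (i - m)) j x = 0)"
    if xX: "x \<in> X" for x
  proof -
    have "Pf x" using xX interior_subset unfolding X_def by blast
    then obtain y where y1: "\<forall>i<m. g i x \<le> grad (g i) x \<bullet> y" and y2: "\<forall>j<k. grad (h j) x \<bullet> y = h j x"
      unfolding Pf_def by blast
    define A where "A l = (if l < m then grad (g l) x else grad (h (l - m)) x)" for l
    define c where "c l = (if l < m then g l x else h (l - m) x)" for l
    have ex: "\<exists>y. (\<forall>l<m. c l \<le> A l \<bullet> y) \<and> (\<forall>l\<in>{m..<m+k}. A l \<bullet> y = c l)"
      using y1 y2 unfolding A_def c_def by (intro exI[of _ y]) auto
    obtain w where w0: "\<forall>l<m. 0 \<le> w l"
      and w1: "\<forall>l<m. c l \<le> A l \<bullet> (grad f x + (\<Sum>i<m+k. w i *\<^sub>R A i))"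
      and w2: "\<forall>l\<in>{m..<m+k}. A l \<bullet> (grad f x + (\<Sum>i<m+k. w i *\<^sub>R A i)) = c l"
      using kkt[OF _ ex, of "grad f x"] by auto
    have vec: "(\<lambda>x. - grad f x) x + (\<Sum>l<m+k. w l *\<^sub>R (\<lambda>l x. if l < m then - grad (g l) x else - grad (h (l - m)) x) l x)
        = - (grad f x + (\<Sum>i<m+k. w i *\<^sub>R A i))"
    proof -
      have "(\<Sum>l<m+k. w l *\<^sub>R (if l < m then - grad (g l) x else - grad (h (l - m)) x)) = (\<Sum>l<m+k. - (w l *\<^sub>R A l))"
        unfolding A_def by (intro sum.cong) auto
      also have "\<dots> = - (\<Sum>l<m+k. w l *\<^sub>R A l)" by (simp add: sum_negf)
      finally show ?thesis by simp
    qed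
    show ?thesis
    proof (intro bexI[of _ w] conjI ballI allI impI)
      show "w \<in> {w. \<forall>l<m. 0 \<le> w l}" using w0 by simp
    next
      fix i assume "i < m"
      show "grad ((\<lambda>i. if i < m then g i else h (i - m)) i) x \<bullet>
            ((\<lambda>x. - grad f x) x + (\<Sum>l<m+k. w l *\<^sub>R (\<lambda>l x. if l < m then - grad (g l) x else - grad (h (l - m)) x) l x))
            + 1 * (\<lambda>i. if i < m then g i else h (i - m)) i x \<le> 0"
      proof -
        have "c i \<le> A i \<bullet> (grad f x + (\<Sum>i<m+k. w i *\<^sub>R A i))" using w1 \<open>i < m\<close> by blast
        moreover have "grad ((\<lambda>i. if i < m then g i else h (i - m)) i) x = A i" "(\<lambda>i. if i < m then g i else h (i - m)) i x = c i"
          using \<open>i < m\<close> unfolding A_def c_def by auto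
        ultimately show ?thesis unfolding vec by (simp add: inner_diff_right inner_add_right)
      qed
    next
      fix j assume "j \<in> {m..<m+k}"
      show "grad ((\<lambda>i. if i < m then g i else h (i - m)) j) x \<bullet>
            ((\<lambda>x. - grad f x) x + (\<Sum>l<m+k. w l *\<^sub>R (\<lambda>l x. if l < m then - grad (g l) x else - grad (h (l - m)) x) l x))
            + 1 * (\<lambda>i. if i < m then g i else h (i - m)) j x = 0"
      proof -
        have "A j \<bullet> (grad f x + (\<Sum>i<m+k. w i *\<^sub>R A i)) = c j" using w2 \<open>j \<in> {m..<m+k}\<close> by blast
        moreover have "grad ((\<lambda>i. if i < m then g i else h (i - m)) j) x = A j" "(\<lambda>i. if i < m then g i else h (i - m)) j x = c j"
          using \<open>j \<in> {m..<m+k}\<close> unfolding A_def c_def by auto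
        ultimately show ?thesis unfolding vec by (simp add: inner_diff_right inner_add_right)
      qed
    qed
  qed
  have "vector_cbf m k (\<lambda>i. if i < m then g i else h (i - m)) C X
             (m + k) (\<lambda>x. - grad f x)
             (\<lambda>l x. if l < m then - grad (g l) x else - grad (h (l - m)) x)
             {w. \<forall>l<m. 0 \<le> w l}"
    unfolding vector_cbf_def
    apply (intro conjI CX C1 Ceq)
    apply (rule exI[of _ "1::real"])
    using main by simp
  then show ?thesis using oX CX unfolding C_def by blast
qed


end
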